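(* Let $F:\mathbb{R}\to[0,1]$ be a distribution function. For every $x\in\mathbb{R}$, \[\big(F(x-),F(x)\big)\subseteq\{\alpha\in(0,1):x=F^{\wedge}(\alpha)\}\subseteq\big[F(x-),F(x)\big].\] In particular, if $x_1\neq x_2$ then $\big(F(x_1-),F(x_1)\big)\cap\big(F(x_2-),F(x_2)\big)=\emptyset$. Moreover, \begin{align*} \bigcup_{x\in J_F}\big(F(x-),F(x)\big)&=\{\alpha\in(0,1):\Delta F(F^{\wedge}(\alpha))>0\text{ and }\alpha=F_\lambda(F^{\wedge}(\alpha))\text{ for some }0<\lambda<1\}\\ &=\{F_\lambda(x):0<\lambda<1,\ x\in J_F\}=R_F\big(J_F\times(0,1)\big)\\ &=(0,1)\setminus\big(F(\mathbb{R})\cup F^{-}(\mathbb{R})\big), \end{align*} where the union is disjoint. Consequently, writing $J_F=\{x_n:n\in M\}$ with pairwise distinct $x_n$, where $M=\{1,\dots,m\}$ is finite or $M=\mathbb{N}$, the map \[\Phi_F:(0,1)^M\to\prod_{n\in M}\big(F(x_n-),F(x_n)\big),\qquad (\lambda_n)_{n\in M}\mapsto \big(F_{\lambda_n}(x_n)\big)_{n\in M}\] is well defined and bijective, with inverse \[\Phi_F^{-1}\big((\alpha_n)_{n\in M}\big)=\Big(\frac{\alpha_n-F(F^{\wedge}(\alpha_n)-)}{\Delta F(F^{\wedge}(\alpha_n))}\Big)_{n\in M}.\]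
   Context: A distribution function is a non-decreasing, right-continuous $F:\mathbb{R}\to[0,1]$ with $\lim_{x\to-\infty}F(x)=0$, $\lim_{x\to\infty}F(x)=1$. Write $F(x-)=\lim_{z\uparrow x}F(z)$, $\Delta F(x)=F(x)-F(x-)$, and $F^{-}:\mathbb{R}\to[0,1]$, $x\mapsto F(x-)$. $J_F=\{x\in\mathbb{R}:\Delta F(x)>0\}$ is the (at most countable) set of jumps of $F$. For $\lambda\in[0,1]$, $F_\lambda(x)=F(x-)+\lambda\Delta F(x)$, and the Rüschendorf transform is $R_F:\mathbb{R}\times[0,1]\to\mathbb{R}$, $R_F(x,\lambda)=F_\lambda(x)$. For $\alpha\in(0,1)$, $F^{\wedge}(\alpha)=\inf\{x\in\mathbb{R}:F(x)\ge\alpha\}$. *)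

theory Defs
  imports Complex_Main "HOL-Library.FuncSet" "HOL-Library.Disjoint_Sets"
begin

definition is_distribution_function :: "(real \<Rightarrow> real) \<Rightarrow> bool" where
  "is_distribution_function F \<longleftrightarrow>
     (\<forall>x. 0 \<le> F x \<and> F x \<le> 1) \<and> mono F \<and>
     (\<forall>x. (F \<longlongrightarrow> F x) (at_right x)) \<and>
     (F \<longlongrightarrow> 0) at_bot \<and> (F \<longlongrightarrow> 1) at_top"

definition left_lim :: "(real \<Rightarrow> real) \<Rightarrow> real \<Rightarrow> real" where
  "left_lim F x = Lim (at_left x) F"

definition jump :: "(real \<Rightarrow> real) \<Rightarrow> real \<Rightarrow> real" where
  "jump F x = F x - left_lim F x"

definition jumps :: "(real \<Rightarrow> real) \<Rightarrow> real set" where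
  "jumps F = {x. jump F x > 0}"

definition F_lam :: "(real \<Rightarrow> real) \<Rightarrow> real \<Rightarrow> real \<Rightarrow> real" where
  "F_lam F lam x = left_lim F x + lam * jump F x"

definition ruesch :: "(real \<Rightarrow> real) \<Rightarrow> real \<times> real \<Rightarrow> real" where
  "ruesch F p = F_lam F (snd p) (fst p)"

definition gen_inv :: "(real \<Rightarrow> real) \<Rightarrow> real \<Rightarrow> real" where
  "gen_inv F \<alpha> = Inf {x. F x \<ge> \<alpha>}"

end

theory Submission
  imports Defs "HOL-Analysis.Analysis"
begin

lemma ll_sup:
  assumes dF: "is_distribution_function F"
  shows "left_lim F x = Sup (F ` {..<x})"
proof -
  have m: "mono F" and b: "\<And>y. F y \<le> 1" using dF by (auto simp: is_distribution_function_def)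
  have "(F \<longlongrightarrow> Sup (F ` ({..<x} \<inter> UNIV))) (at x within ({..<x} \<inter> UNIV))"
    by (rule Lim_left_bound[where K=1]) (auto intro: monoD[OF m] b)
  hence "(F \<longlongrightarrow> Sup (F ` {..<x})) (at_left x)" by simp
  thus ?thesis unfolding left_lim_def by (intro tendsto_Lim) (auto simp: trivial_limit_at_left_real)
qed

lemma ll_le:
  assumes dF: "is_distribution_function F" and "y < x"
  shows "F y \<le> left_lim F x"
proof -
  have b: "\<And>y. F y \<le> 1" using dF by (auto simp: is_distribution_function_def)
  show ?thesis unfolding ll_sup[OF dF] using assms(2) b
    by (intro cSup_upper) (auto intro!: bdd_aboveI[where M=1])
qed

lemma ll_ge:
  assumes dF: "is_distribution_function F" and "\<And>y. y < x \<Longrightarrow> F y \<le> c"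
  shows "left_lim F x \<le> c"
  unfolding ll_sup[OF dF] using assms(2) by (intro cSup_least) auto

lemma ll_leF:
  assumes dF: "is_distribution_function F"
  shows "left_lim F x \<le> F x"
  using dF by (intro ll_ge) (auto simp: is_distribution_function_def mono_def)

lemma ll_nonneg:
  assumes dF: "is_distribution_function F"
  shows "0 \<le> left_lim F x"
proof -
  have "0 \<le> F (x - 1)" using dF by (auto simp: is_distribution_function_def)
  also have "\<dots> \<le> left_lim F x" by (rule ll_le[OF dF]) simp
  finally show ?thesis .
qed

lemma gi_unique:
  assumes dF: "is_distribution_function F" and "\<alpha> \<le> F x" and "\<And>y. y < x \<Longrightarrow> F y < \<alpha>"
  shows "gen_inv F \<alpha> = x"
proof -
  have m: "mono F" using dF by (auto simp: is_distribution_function_def)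
  have "{y. F y \<ge> \<alpha>} = {x..}"
  proof safe
    fix y assume "\<alpha> \<le> F y" thus "x \<le> y" using assms(3)[of y] by force
  next
    fix y assume "x \<le> y" thus "\<alpha> \<le> F y" using monoD[OF m, of x y] assms(2) by simp
  qed
  thus ?thesis unfolding gen_inv_def by simp
qed

lemma gi_props:
  assumes dF: "is_distribution_function F" and a: "0 < \<alpha>" "\<alpha> < 1"
  shows "\<alpha> \<le> F (gen_inv F \<alpha>) \<and> (\<forall>y < gen_inv F \<alpha>. F y < \<alpha>)"
proof -
  have m: "mono F" and rc: "\<And>x. (F \<longlongrightarrow> F x) (at_right x)"
    and t0: "(F \<longlongrightarrow> 0) at_bot" and t1: "(F \<longlongrightarrow> 1) at_top"
    using dF by (auto simp: is_distribution_function_def)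
  define S where "S = {y. F y \<ge> \<alpha>}"
  have "eventually (\<lambda>y. F y > \<alpha>) at_top" using t1 a by (intro order_tendstoD) auto
  then obtain y1 where y1: "\<And>y. y \<ge> y1 \<Longrightarrow> F y > \<alpha>" by (auto simp: eventually_at_top_linorder)
  have "eventually (\<lambda>y. F y < \<alpha>) at_bot" using t0 a by (intro order_tendstoD) auto
  then obtain y0 where y0: "\<And>y. y \<le> y0 \<Longrightarrow> F y < \<alpha>" by (auto simp: eventually_at_bot_linorder)
  have ne: "y1 \<in> S" using y1[of y1] by (simp add: S_def)
  have bb: "bdd_below S"
  proof (rule bdd_belowI[where m=y0])
    fix s assume "s \<in> S" thus "y0 \<le> s" using y0[of s] by (force simp: S_def)
  qed
  define g where "g = Inf S"
  have below: "\<forall>y<g. F y < \<alpha>"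
  proof safe
    fix y assume "y < g"
    show "F y < \<alpha>"
    proof (rule ccontr)
      assume "\<not> F y < \<alpha>" hence "y \<in> S" by (simp add: S_def)
      hence "g \<le> y" unfolding g_def using bb by (rule cInf_lower)
      thus False using \<open>y < g\<close> by simp
    qed
  qed
  have ev: "eventually (\<lambda>y. \<alpha> \<le> F y) (at_right g)"
    using eventually_at_right_less[of g]
  proof eventually_elim
    case (elim y)
    then obtain s where "s \<in> S" "s < y" using cInf_lessD[of S y] ne unfolding g_def by blast
    thus ?case using monoD[OF m, of s y] by (simp add: S_def)
  qed
  have "\<alpha> \<le> F g"
    by (rule tendsto_lowerbound[OF rc ev]) (simp add: trivial_limit_at_right_real)
  thus ?thesis using below unfolding g_def S_def gen_inv_def by simp
qed

lemma in_int:
  assumes dF: "is_distribution_function F" and "left_lim F x < \<alpha>" "\<alpha> < F x"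
  shows "0 < \<alpha> \<and> \<alpha> < 1 \<and> gen_inv F \<alpha> = x"
proof -
  have "0 \<le> left_lim F x" by (rule ll_nonneg[OF dF])
  moreover have "F x \<le> 1" using dF by (auto simp: is_distribution_function_def)
  moreover have "gen_inv F \<alpha> = x"
    using assms by (intro gi_unique[OF dF]) (auto dest: ll_le[OF dF])
  ultimately show ?thesis using assms by auto
qed

lemma bnds:
  assumes dF: "is_distribution_function F" and "0 < \<alpha>" "\<alpha> < 1"
  shows "left_lim F (gen_inv F \<alpha>) \<le> \<alpha> \<and> \<alpha> \<le> F (gen_inv F \<alpha>)"
proof -
  note g = gi_props[OF assms]
  have "left_lim F (gen_inv F \<alpha>) \<le> \<alpha>" using g by (intro ll_ge[OF dF]) (auto intro: less_imp_le)
  thus ?thesis using g by simp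
qed

lemma not_range:
  assumes dF: "is_distribution_function F" and "left_lim F x < \<alpha>" "\<alpha> < F x"
  shows "\<alpha> \<notin> range F \<and> \<alpha> \<notin> range (left_lim F)"
proof -
  have m: "mono F" using dF by (auto simp: is_distribution_function_def)
  have 1: "F y \<noteq> \<alpha>" for y
  proof (cases "y < x")
    case True thus ?thesis using ll_le[OF dF True] assms by auto
  next
    case False thus ?thesis using monoD[OF m, of x y] assms by auto
  qed
  have 2: "left_lim F y \<noteq> \<alpha>" for y
  proof (cases "y \<le> x")
    case True
    hence "left_lim F y \<le> left_lim F x"
    proof (cases "y = x")
      case False
      with True have "y < x" by simp
      thus ?thesis using ll_leF[OF dF, of y] ll_le[OF dF \<open>y < x\<close>] by simp
    qed simp
    thus ?thesis using assms by auto
  next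
    case False thus ?thesis using ll_le[OF dF, of x y] assms by auto
  qed
  show ?thesis using 1 2 by auto
qed

theorem mainTheorem2:
  fixes F :: "real \<Rightarrow> real"
  assumes dF: "is_distribution_function F"
  shows
    "(\<forall>x. {left_lim F x <..< F x} \<subseteq> {\<alpha> \<in> {0<..<1}. x = gen_inv F \<alpha>}
          \<and> {\<alpha> \<in> {0<..<1}. x = gen_inv F \<alpha>} \<subseteq> {left_lim F x .. F x})
     \<and> (\<forall>x1 x2. x1 \<noteq> x2 \<longrightarrow> {left_lim F x1 <..< F x1} \<inter> {left_lim F x2 <..< F x2} = {})
     \<and> (\<Union>x\<in>jumps F. {left_lim F x <..< F x})
         = {\<alpha> \<in> {0<..<1}. jump F (gen_inv F \<alpha>) > 0 \<and>
              (\<exists>lam. 0 < lam \<and> lam < 1 \<and> \<alpha> = F_lam F lam (gen_inv F \<alpha>))}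
     \<and> {\<alpha> \<in> {0<..<1}. jump F (gen_inv F \<alpha>) > 0 \<and>
              (\<exists>lam. 0 < lam \<and> lam < 1 \<and> \<alpha> = F_lam F lam (gen_inv F \<alpha>))}
         = {F_lam F lam x | lam x. 0 < lam \<and> lam < 1 \<and> x \<in> jumps F}
     \<and> {F_lam F lam x | lam x. 0 < lam \<and> lam < 1 \<and> x \<in> jumps F}
         = ruesch F ` (jumps F \<times> {0<..<1})
     \<and> ruesch F ` (jumps F \<times> {0<..<1})
         = {0<..<1} - (range F \<union> range (left_lim F))
     \<and> disjoint_family_on (\<lambda>x. {left_lim F x <..< F x}) (jumps F)
     \<and> (\<forall>(M :: nat set) (xs :: nat \<Rightarrow> real).
          ((\<exists>m. M = {1..m}) \<or> M = UNIV) \<and> inj_on xs M \<and> xs ` M = jumps F \<longrightarrow>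
          (let \<Phi> = (\<lambda>lam. restrict (\<lambda>n. F_lam F (lam n) (xs n)) M);
               Dom = PiE M (\<lambda>_. {0<..<1::real});
               Cod = PiE M (\<lambda>n. {left_lim F (xs n) <..< F (xs n)})
           in bij_betw \<Phi> Dom Cod \<and>
              (\<forall>\<alpha>\<in>Cod. inv_into Dom \<Phi> \<alpha> =
                 restrict (\<lambda>n. (\<alpha> n - left_lim F (gen_inv F (\<alpha> n))) / jump F (gen_inv F (\<alpha> n))) M)))"
proof -
  let ?L = "left_lim F"
  let ?g = "gen_inv F"
  define U where "U = (\<Union>x\<in>jumps F. {?L x <..< F x})"
  have jd: "jump F x = F x - ?L x" for x by (simp add: jump_def)
  have c1: "\<forall>x. {?L x <..< F x} \<subseteq> {\<alpha> \<in> {0<..<1}. x = ?g \<alpha>}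
          \<and> {\<alpha> \<in> {0<..<1}. x = ?g \<alpha>} \<subseteq> {?L x .. F x}"
    using in_int[OF dF] bnds[OF dF] by fastforce
  have c2: "\<forall>x1 x2. x1 \<noteq> x2 \<longrightarrow> {?L x1 <..< F x1} \<inter> {?L x2 <..< F x2} = {}"
  proof (intro allI impI)
    fix x1 x2 :: real assume ne: "x1 \<noteq> x2"
    show "{?L x1 <..< F x1} \<inter> {?L x2 <..< F x2} = {}"
    proof (rule ccontr)
      assume "{?L x1 <..< F x1} \<inter> {?L x2 <..< F x2} \<noteq> {}"
      then obtain a where "a \<in> {?L x1 <..< F x1} \<inter> {?L x2 <..< F x2}" by blast
      hence "?L x1 < a" "a < F x1" "?L x2 < a" "a < F x2" by auto
      thus False using in_int[OF dF, of x1 a] in_int[OF dF, of x2 a] ne by auto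
    qed
  qed
  have s2: "{\<alpha> \<in> {0<..<1}. jump F (?g \<alpha>) > 0 \<and>
              (\<exists>lam. 0 < lam \<and> lam < 1 \<and> \<alpha> = F_lam F lam (?g \<alpha>))} = U"
  proof safe
    fix \<alpha> lam assume a: "\<alpha> \<in> {0<..<1}" "jump F (?g \<alpha>) > 0" "0 < lam" "lam < 1"
      "\<alpha> = F_lam F lam (?g \<alpha>)"
    have "?L (?g \<alpha>) < \<alpha>" "\<alpha> < F (?g \<alpha>)"
    proof -
      have "0 < lam * jump F (?g \<alpha>)" using a by simp
      moreover have "lam * jump F (?g \<alpha>) < jump F (?g \<alpha>)" using a by simp
      ultimately show "?L (?g \<alpha>) < \<alpha>" "\<alpha> < F (?g \<alpha>)"
        using a(5) by (auto simp: F_lam_def jd)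
    qed
    moreover have "?g \<alpha> \<in> jumps F" using a(2) by (simp add: jumps_def)
    ultimately show "\<alpha> \<in> U" unfolding U_def by (intro UN_I[of "?g \<alpha>"]) auto
  next
    fix \<alpha> assume "\<alpha> \<in> U"
    then obtain x where x: "jump F x > 0" "?L x < \<alpha>" "\<alpha> < F x" unfolding U_def jumps_def by auto
    note ii = in_int[OF dF x(2,3)]
    show "\<alpha> \<in> {0<..<1}" using ii by auto
    show "jump F (?g \<alpha>) > 0" using ii x by simp
    show "\<exists>lam. 0 < lam \<and> lam < 1 \<and> \<alpha> = F_lam F lam (?g \<alpha>)"
      using x ii by (intro exI[of _ "(\<alpha> - ?L x) / jump F x"])
        (auto simp: F_lam_def jd field_simps)
  qed
  have s3: "{F_lam F lam x | lam x. 0 < lam \<and> lam < 1 \<and> x \<in> jumps F} = U"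
  proof safe
    fix lam x assume a: "0 < lam" "lam < (1::real)" "x \<in> jumps F"
    hence j: "jump F x > 0" by (simp add: jumps_def)
    have "0 < lam * jump F x" "lam * jump F x < jump F x" using a j by simp_all
    thus "F_lam F lam x \<in> U" using a unfolding U_def by (intro UN_I[of x]) (auto simp: F_lam_def jd)
  next
    fix \<alpha> assume "\<alpha> \<in> U"
    then obtain x where x: "x \<in> jumps F" "jump F x > 0" "?L x < \<alpha>" "\<alpha> < F x"
      unfolding U_def jumps_def by auto
    show "\<exists>lam y. \<alpha> = F_lam F lam y \<and> 0 < lam \<and> lam < 1 \<and> y \<in> jumps F"
      using x by (intro exI[of _ "(\<alpha> - ?L x) / jump F x"] exI[of _ x])
        (auto simp: F_lam_def jd field_simps)
  qed
  have s4: "ruesch F ` (jumps F \<times> {0<..<1}) = {F_lam F lam x | lam x. 0 < lam \<and> lam < 1 \<and> x \<in> jumps F}"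
  proof safe
    fix a b assume "a \<in> jumps F" "b \<in> {0<..<(1::real)}"
    thus "\<exists>lam x. ruesch F (a, b) = F_lam F lam x \<and> 0 < lam \<and> lam < 1 \<and> x \<in> jumps F"
      by (auto simp: ruesch_def)
  next
    fix lam x assume "0 < lam" "lam < (1::real)" "x \<in> jumps F"
    thus "F_lam F lam x \<in> ruesch F ` (jumps F \<times> {0<..<1})"
      by (intro image_eqI[of _ _ "(x, lam)"]) (auto simp: ruesch_def)
  qed
  have s5a: "\<alpha> \<in> U" if a: "\<alpha> \<in> {0<..<1}" "\<alpha> \<notin> range F" "\<alpha> \<notin> range ?L" for \<alpha>
  proof -
    note b = bnds[OF dF, of \<alpha>]
    have "\<alpha> \<noteq> F (?g \<alpha>)" "\<alpha> \<noteq> ?L (?g \<alpha>)" using a(2,3) by (metis rangeI)+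
    hence "?L (?g \<alpha>) < \<alpha>" "\<alpha> < F (?g \<alpha>)" using a b by (auto simp: order_le_less)
    thus "\<alpha> \<in> U" unfolding U_def by (intro UN_I[of "?g \<alpha>"]) (auto simp: jumps_def jd)
  qed
  have s5b: "\<alpha> \<in> {0<..<1} - (range F \<union> range ?L)" if aU: "\<alpha> \<in> U" for \<alpha>
  proof -
    obtain x where x: "?L x < \<alpha>" "\<alpha> < F x" using aU unfolding U_def by auto
    show ?thesis using in_int[OF dF x] not_range[OF dF x] by auto
  qed
  have s5: "{0<..<1} - (range F \<union> range ?L) = U"
    using s5a s5b by blast
  have s6: "disjoint_family_on (\<lambda>x. {?L x <..< F x}) (jumps F)"
    using c2 unfolding disjoint_family_on_def by blast
  have s7: "((\<exists>m. M = {1..m}) \<or> M = UNIV) \<and> inj_on xs M \<and> xs ` M = jumps F \<longrightarrow>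
          (let \<Phi> = (\<lambda>lam. restrict (\<lambda>n. F_lam F (lam n) (xs n)) M);
               Dom = PiE M (\<lambda>_. {0<..<1::real});
               Cod = PiE M (\<lambda>n. {?L (xs n) <..< F (xs n)})
           in bij_betw \<Phi> Dom Cod \<and>
              (\<forall>\<alpha>\<in>Cod. inv_into Dom \<Phi> \<alpha> =
                 restrict (\<lambda>n. (\<alpha> n - ?L (?g (\<alpha> n))) / jump F (?g (\<alpha> n))) M))"
    for M :: "nat set" and xs :: "nat \<Rightarrow> real"
  proof (intro impI)
    assume h: "((\<exists>m. M = {1..m}) \<or> M = UNIV) \<and> inj_on xs M \<and> xs ` M = jumps F"
    have jp: "n \<in> M \<Longrightarrow> jump F (xs n) > 0" for n using h by (auto simp: jumps_def)
    define \<Phi> where "\<Phi> = (\<lambda>lam. restrict (\<lambda>n. F_lam F (lam n) (xs n)) M)"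
    define Dom where "Dom = PiE M (\<lambda>_. {0<..<1::real})"
    define Cod where "Cod = PiE M (\<lambda>n. {?L (xs n) <..< F (xs n)})"
    define \<Psi> where "\<Psi> = (\<lambda>\<alpha>. restrict (\<lambda>n. (\<alpha> n - ?L (?g (\<alpha> n))) / jump F (?g (\<alpha> n))) M)"
    have gx: "\<alpha> \<in> Cod \<Longrightarrow> n \<in> M \<Longrightarrow> ?g (\<alpha> n) = xs n" for \<alpha> n
      using in_int[OF dF] unfolding Cod_def by (auto simp: PiE_iff)
    have 1: "\<Phi> \<in> Dom \<rightarrow> Cod"
    proof
      fix lam assume "lam \<in> Dom"
      hence l: "n \<in> M \<Longrightarrow> 0 < lam n \<and> lam n < 1" for n by (auto simp: Dom_def PiE_iff)
      have "n \<in> M \<Longrightarrow> ?L (xs n) < F_lam F (lam n) (xs n) \<and> F_lam F (lam n) (xs n) < F (xs n)" for n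
      proof -
        assume n: "n \<in> M"
        have "0 < lam n * jump F (xs n)" "lam n * jump F (xs n) < jump F (xs n)"
          using l[OF n] jp[OF n] by simp_all
        thus ?thesis by (auto simp: F_lam_def jd)
      qed
      thus "\<Phi> lam \<in> Cod" by (auto simp: \<Phi>_def Cod_def PiE_iff)
    qed
    have 2: "\<Psi> \<in> Cod \<rightarrow> Dom"
    proof
      fix \<alpha> assume a: "\<alpha> \<in> Cod"
      have "n \<in> M \<Longrightarrow> 0 < (\<alpha> n - ?L (xs n)) / jump F (xs n) \<and> (\<alpha> n - ?L (xs n)) / jump F (xs n) < 1" for n
        using a jp[of n] by (auto simp: Cod_def PiE_iff jd field_simps)
      thus "\<Psi> \<alpha> \<in> Dom" using gx[OF a] by (auto simp: \<Psi>_def Dom_def PiE_iff)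
    qed
    have 3: "\<Psi> (\<Phi> lam) = lam" if l: "lam \<in> Dom" for lam
    proof -
      have "\<Phi> lam \<in> Cod" using 1 l by auto
      note g = gx[OF this]
      show ?thesis
      proof (rule ext)
        fix n show "\<Psi> (\<Phi> lam) n = lam n"
        proof (cases "n \<in> M")
          case True
          have "\<Psi> (\<Phi> lam) n = (F_lam F (lam n) (xs n) - ?L (xs n)) / jump F (xs n)"
            using g[OF True] True by (simp add: \<Psi>_def \<Phi>_def)
          also have "\<dots> = lam n" using jp[OF True] by (simp add: F_lam_def)
          finally show ?thesis .
        next
          case False thus ?thesis using l by (auto simp: \<Psi>_def Dom_def PiE_iff extensional_def)
        qed
      qed
    qed
    have 4: "\<Phi> (\<Psi> \<alpha>) = \<alpha>" if a: "\<alpha> \<in> Cod" for \<alpha>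
    proof (rule ext)
      fix n show "\<Phi> (\<Psi> \<alpha>) n = \<alpha> n"
      proof (cases "n \<in> M")
        case True
        thus ?thesis using gx[OF a True] jp[OF True] by (simp add: \<Psi>_def \<Phi>_def F_lam_def)
      next
        case False thus ?thesis using a by (auto simp: \<Phi>_def Cod_def PiE_iff extensional_def)
      qed
    qed
    have bij: "bij_betw \<Phi> Dom Cod" using 1 2 3 4 by (intro bij_betwI[where g=\<Psi>]) auto
    have "\<forall>\<alpha>\<in>Cod. inv_into Dom \<Phi> \<alpha> = \<Psi> \<alpha>"
    proof
      fix \<alpha> assume a: "\<alpha> \<in> Cod"
      show "inv_into Dom \<Phi> \<alpha> = \<Psi> \<alpha>"
        by (rule inv_into_f_eq[OF bij_betw_imp_inj_on[OF bij]]) (use 2 a 4 in auto)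
    qed
    thus "let \<Phi> = (\<lambda>lam. restrict (\<lambda>n. F_lam F (lam n) (xs n)) M);
               Dom = PiE M (\<lambda>_. {0<..<1::real});
               Cod = PiE M (\<lambda>n. {?L (xs n) <..< F (xs n)})
           in bij_betw \<Phi> Dom Cod \<and>
              (\<forall>\<alpha>\<in>Cod. inv_into Dom \<Phi> \<alpha> =
                 restrict (\<lambda>n. (\<alpha> n - ?L (?g (\<alpha> n))) / jump F (?g (\<alpha> n))) M)"
      using bij unfolding Let_def \<Phi>_def Dom_def Cod_def \<Psi>_def by simp
  qed
  show ?thesis
    unfolding U_def[symmetric] s2 s3 s4 s5 by (intro conjI refl c1 c2 s6 allI s7)
qed

end
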